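(* Assume $V=L$. Let $i\in T$ and $X\in\mathrm{IPS}_{[\subseteq i]}$. Then every nonempty set $Y\subseteq X$ which is clopen in $X$ (in the relative topology) belongs to $\mathrm{IPS}_{[\subseteq i]}$.
   Context: $T$ is the set of all nonempty finite sequences of countable ordinals, ordered by strict extension $\subset$; $[\subseteq i]=\{j\in T: j\subseteq i\}$. $\Xi$ is the set of all at most countable $\xi\subseteq T$ closed downward under $\subset$ (so $[\subseteq i]\in\Xi$). $D=2^\omega$; $D^\xi$ is the product of $\xi$ copies of $D$. For $\eta\subseteq\xi$ and $x\in D^\xi$, $x\restriction\eta$ is the restriction. For $\zeta\in\Xi$, $\mathrm{IPS}_\zeta$ is the set of all $X\subseteq D^\zeta$ for which there is a homeomorphism $H:D^\zeta\to X$ onto $X$ such that for all $x_0,x_1\in D^\zeta$ and all $\xi\in\Xi$, $\xi\subseteq\zeta$: $x_0\restriction\xi=x_1\restriction\xi\iff H(x_0)\restriction\xi=H(x_1)\restriction\xi$. *)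

theory Defs
  imports "HOL-Analysis.Analysis" "HOL-Library.Sublist"
begin

text \<open>Sequences are lists over an element type 'a (standing for countable ordinals).
  T = nonempty finite sequences, ordered by (strict) prefix.\<close>

definition Tset :: "'a list set" where
  "Tset = {j. j \<noteq> []}"

definition below :: "'a list \<Rightarrow> 'a list set" where
  "below i = {j \<in> Tset. prefix j i}"

definition Xi :: "'a list set set" where
  "Xi = {\<xi>. \<xi> \<subseteq> Tset \<and> countable \<xi> \<and>
            (\<forall>j\<in>\<xi>. \<forall>k\<in>Tset. strict_prefix k j \<longrightarrow> k \<in> \<xi>)}"

definition Dtop :: "(nat \<Rightarrow> bool) topology" where
  "Dtop = product_topology (\<lambda>_. discrete_topology UNIV) UNIV"

definition prodD :: "'a list set \<Rightarrow> ('a list \<Rightarrow> nat \<Rightarrow> bool) topology" where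
  "prodD \<xi> = product_topology (\<lambda>_. Dtop) \<xi>"

definition IPS :: "'a list set \<Rightarrow> ('a list \<Rightarrow> nat \<Rightarrow> bool) set set" where
  "IPS \<zeta> = {X. X \<subseteq> topspace (prodD \<zeta>) \<and>
     (\<exists>H. homeomorphic_map (prodD \<zeta>) (subtopology (prodD \<zeta>) X) H \<and>
        (\<forall>x0\<in>topspace (prodD \<zeta>). \<forall>x1\<in>topspace (prodD \<zeta>). \<forall>\<xi>\<in>Xi. \<xi> \<subseteq> \<zeta> \<longrightarrow>
           (restrict x0 \<xi> = restrict x1 \<xi> \<longleftrightarrow> restrict (H x0) \<xi> = restrict (H x1) \<xi>)))}"

end

theory Submission
  imports Defs
begin


definition goodf :: "(nat\<Rightarrow>bool) set \<Rightarrow> ((nat\<Rightarrow>bool)\<Rightarrow>(nat\<Rightarrow>bool)) \<Rightarrow> bool" where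
  "goodf A f \<longleftrightarrow> bij_betw f UNIV A \<and>
     (\<forall>b l. \<exists>M. \<forall>b'. (\<forall>l'<M. b' l' = b l') \<longrightarrow> f b' l = f b l)"

definition Phi :: "(nat\<Rightarrow>bool) set \<Rightarrow> (nat\<Rightarrow>bool)\<Rightarrow>(nat\<Rightarrow>bool)" where
  "Phi A = (SOME f. goodf A f)"

definition trn :: "nat \<Rightarrow> (nat\<Rightarrow>bool) \<Rightarrow> nat \<Rightarrow> bool" where
  "trn N b = (\<lambda>l. l < N \<and> b l)"

definition cnt :: "nat \<Rightarrow> (nat \<Rightarrow> bool) \<Rightarrow> nat" where
  "cnt m x = (LEAST j. j = m - 1 \<or> \<not> x j)"

lemma cnt_props:
  "cnt m x \<le> m - 1" "cnt m x < m - 1 \<Longrightarrow> \<not> x (cnt m x)" "j < cnt m x \<Longrightarrow> x j"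
proof -
  have ex: "\<exists>j. j = m - 1 \<or> \<not> x j" by blast
  have 1: "cnt m x = m - 1 \<or> \<not> x (cnt m x)"
    unfolding cnt_def by (rule LeastI_ex[OF ex])
  have 2: "\<And>j. j = m - 1 \<or> \<not> x j \<Longrightarrow> cnt m x \<le> j"
    unfolding cnt_def by (rule Least_le)
  show "cnt m x \<le> m - 1" using 2 by blast
  show "cnt m x < m - 1 \<Longrightarrow> \<not> x (cnt m x)" using 1 by auto
  show "j < cnt m x \<Longrightarrow> x j" using 2[of j] by force
qed

lemma cnt_unique:
  assumes "c \<le> m - 1" "c < m - 1 \<Longrightarrow> \<not> x c" "\<And>j. j < c \<Longrightarrow> x j"
  shows "cnt m x = c"
proof -
  have a: "cnt m x \<le> c"
    unfolding cnt_def using assms by (intro Least_le) (cases "c < m - 1", auto)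
  show ?thesis
  proof (rule ccontr)
    assume "cnt m x \<noteq> c"
    then have "cnt m x < c" using a by simp
    then show False using cnt_props[where m=m and x=x] assms(1,3) by fastforce
  qed
qed

lemma cnt_local:
  assumes "\<And>j. j < m - 1 \<Longrightarrow> x j = y j"
  shows "cnt m x = cnt m y"
proof -
  show ?thesis
    apply (rule cnt_unique)
    using cnt_props[where m=m and x=y] assms by auto
qed

lemma finite_trunc_funs: "finite {f::nat\<Rightarrow>bool. \<forall>l. f l \<longrightarrow> l < N}"
proof -
  have "{f::nat\<Rightarrow>bool. \<forall>l. f l \<longrightarrow> l < N} \<subseteq> (\<lambda>S l. l \<in> S) ` Pow {..<N}"
  proof
    fix f :: "nat \<Rightarrow> bool" assume "f \<in> {f. \<forall>l. f l \<longrightarrow> l < N}"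
    then have "f = (\<lambda>l. l \<in> {l. f l})" "{l. f l} \<in> Pow {..<N}" by auto
    then show "f \<in> (\<lambda>S l. l \<in> S) ` Pow {..<N}" by blast
  qed
  then show ?thesis by (rule finite_subset) auto
qed

lemma good_exists:
  assumes ne: "A \<noteq> {}" and det: "\<And>b b'. (\<And>l. l < N \<Longrightarrow> b l = b' l) \<Longrightarrow> b \<in> A \<Longrightarrow> b' \<in> A"
  shows "\<exists>f. goodf A f"
proof -
  define T where "T = trn N ` A"
  have "T \<subseteq> {f. \<forall>l. f l \<longrightarrow> l < N}" unfolding T_def trn_def by auto
  then have "finite T" using finite_trunc_funs finite_subset by blast
  then obtain ss where ss: "set ss = T" "distinct ss" using finite_distinct_list by blast
  define m where "m = length ss"
  have "T \<noteq> {}" using ne unfolding T_def by auto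
  then have m1: "m \<ge> 1" using ss unfolding m_def by (cases ss) auto
  define sk where "sk x = (if cnt m x < m - 1 then Suc (cnt m x) else m - 1)" for x
  define f where "f x = (\<lambda>l. if l < N then (ss ! cnt m x) l else x (l - N + sk x))" for x
  have cm: "cnt m x < m" for x using cnt_props(1)[where m=m and x=x] m1 by linarith
  have ssT: "ss ! cnt m x \<in> T" for x using cm[of x] ss(1) unfolding m_def by auto
  have ssF: "l \<ge> N \<Longrightarrow> \<not> (ss ! cnt m x) l" for x l
    using ssT[of x] unfolding T_def trn_def by auto
  have inj: "inj f"
  proof (rule injI)
    fix x y assume fe: "f x = f y"
    have "(ss ! cnt m x) = (ss ! cnt m y)"
    proof
      fix l show "(ss ! cnt m x) l = (ss ! cnt m y) l"
      proof (cases "l < N")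
        case True then show ?thesis using fun_cong[OF fe, of l] unfolding f_def by simp
      next
        case False then show ?thesis using ssF[of l x] ssF[of l y] by simp
      qed
    qed
    then have ce: "cnt m x = cnt m y"
      using nth_eq_iff_index_eq[OF ss(2)] cm unfolding m_def by blast
    then have ske: "sk x = sk y" unfolding sk_def by simp
    show "x = y"
    proof
      fix l
      show "x l = y l"
      proof (cases "l < sk x")
        case False
        have e: "f x (l - sk x + N) = x l" "f y (l - sk x + N) = y l"
          using False ske unfolding f_def by auto
        then show ?thesis using fe by metis
      next
        case True
        show ?thesis
        proof (cases "cnt m x < m - 1")
          case c: True
          then have "l \<le> cnt m x" using True unfolding sk_def by simp
          then show ?thesis using cnt_props[where m=m and x=x] cnt_props[where m=m and x=y] ce c
            by (cases "l = cnt m x") auto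
        next
          case c: False
          then have "l < cnt m x" using True cnt_props(1)[where m=m and x=x] unfolding sk_def by simp
          then show ?thesis using cnt_props(3)[where j=l and m=m and x=x] cnt_props(3)[where j=l and m=m and x=y] ce by simp
        qed
      qed
    qed
  qed
  have into: "f x \<in> A" for x
  proof -
    obtain a where a: "a \<in> A" "ss ! cnt m x = trn N a" using ssT[of x] unfolding T_def by auto
    show ?thesis
      apply (rule det[OF _ a(1)])
      using a(2) unfolding f_def trn_def by (simp add: fun_eq_iff)
  qed
  have onto: "b \<in> range f" if b: "b \<in> A" for b
  proof -
    have "trn N b \<in> set ss" using b ss(1) unfolding T_def by auto
    then obtain c0 where c0: "c0 < m" "ss ! c0 = trn N b" unfolding m_def by (auto simp: in_set_conv_nth)
    define s0 where "s0 = (if c0 < m - 1 then Suc c0 else m - 1)"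
    define x where "x = (\<lambda>l. if l < s0 then l \<noteq> c0 else b (l - s0 + N))"
    have cx: "cnt m x = c0"
      apply (rule cnt_unique)
      using c0 unfolding x_def s0_def by auto
    have "f x = b"
    proof
      fix l
      have skx: "sk x = s0" using cx unfolding sk_def s0_def by simp
      show "f x l = b l"
      proof (cases "l < N")
        case True then show ?thesis using cx c0(2) unfolding f_def trn_def by simp
      next
        case False
        then have "\<not> (l - N + s0 < s0)" "l - N + s0 - s0 + N = l" by auto
        then show ?thesis using False skx unfolding f_def x_def by simp
      qed
    qed
    then show ?thesis by blast
  qed
  have bij: "bij_betw f UNIV A"
    unfolding bij_betw_def using inj into onto by auto
  have loc: "\<exists>M. \<forall>b'. (\<forall>l'<M. b' l' = b l') \<longrightarrow> f b' l = f b l" for b l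
  proof (rule exI[of _ "l + m + 1"], intro allI impI)
    fix b' assume ag: "\<forall>l'<l + m + 1. b' l' = b l'"
    have ce: "cnt m b' = cnt m b" by (rule cnt_local) (use ag in auto)
    then have "sk b' = sk b" unfolding sk_def by simp
    moreover have "sk b \<le> m" unfolding sk_def using cm[of b] by auto
    ultimately show "f b' l = f b l" unfolding f_def using ce ag by auto
  qed
  show ?thesis unfolding goodf_def using bij loc by blast
qed

lemma Phi_good:
  assumes "A \<noteq> {}" and "\<And>b b'. (\<And>l. l < N \<Longrightarrow> b l = b' l) \<Longrightarrow> b \<in> A \<Longrightarrow> b' \<in> A"
  shows "goodf A (Phi A)"
  unfolding Phi_def using good_exists[OF assms] by (rule someI_ex)



definition cyl :: "'a list set \<Rightarrow> ('a list \<Rightarrow> nat \<Rightarrow> bool) \<Rightarrow> nat \<Rightarrow> ('a list \<Rightarrow> nat \<Rightarrow> bool) set" where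
  "cyl I x M = {y \<in> topspace (prodD I). \<forall>q\<in>I. \<forall>l<M. y q l = x q l}"

lemma top_Dtop[simp]: "topspace Dtop = UNIV"
  unfolding Dtop_def by (simp add: PiE_UNIV_domain)

lemma top_prodD: "topspace (prodD I) = (\<Pi>\<^sub>E q\<in>I. UNIV)"
  unfolding prodD_def by simp

lemma cont_bit: "q \<in> I \<Longrightarrow> continuous_map (prodD I) (discrete_topology UNIV) (\<lambda>y. y q l)"
proof -
  assume q: "q \<in> I"
  have 1: "continuous_map (prodD I) Dtop (\<lambda>y. y q)"
    unfolding prodD_def using continuous_map_product_projection[OF q] by blast
  have 2: "continuous_map Dtop (discrete_topology UNIV) (\<lambda>b. b l)"
    unfolding Dtop_def using continuous_map_product_projection[of l UNIV] by blast
  show ?thesis using continuous_map_compose[OF 1 2] by (simp add: o_def)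
qed

lemma cyl_open:
  assumes "finite I"
  shows "openin (prodD I) (cyl I x M)"
proof (cases "I \<times> {..<M} = {}")
  case True
  then have "cyl I x M = topspace (prodD I)" unfolding cyl_def by auto
  then show ?thesis by simp
next
  case False
  have eq: "cyl I x M = (\<Inter>p\<in>I \<times> {..<M}. {y \<in> topspace (prodD I). (\<lambda>y. y (fst p) (snd p)) y \<in> {x (fst p) (snd p)}})"
    using False unfolding cyl_def by auto
  show ?thesis
    unfolding eq
  proof (rule openin_INT2)
    show "finite (I \<times> {..<M})" using assms by simp
    show "I \<times> {..<M} \<noteq> {}" by (rule False)
    fix p assume "p \<in> I \<times> {..<M}"
    then have "fst p \<in> I" by auto
    then show "openin (prodD I) {y \<in> topspace (prodD I). (\<lambda>y. y (fst p) (snd p)) y \<in> {x (fst p) (snd p)}}"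
      by (intro openin_continuous_map_preimage[OF cont_bit]) auto
  qed
qed

lemma cyl_self: "x \<in> topspace (prodD I) \<Longrightarrow> x \<in> cyl I x M"
  unfolding cyl_def by auto

lemma LD_cont:
  assumes fin: "finite I"
    and ext: "\<And>x. x \<in> topspace (prodD I) \<Longrightarrow> f x \<in> extensional J"
    and loc: "\<And>x0 p l. x0 \<in> topspace (prodD I) \<Longrightarrow> p \<in> J \<Longrightarrow>
                \<exists>M. \<forall>y\<in>cyl I x0 M. f y p l = f x0 p l"
  shows "continuous_map (prodD I) (prodD J) f"
  unfolding prodD_def[of J]
proof (subst continuous_map_componentwise, intro conjI ballI)
  show "f ` topspace (prodD I) \<subseteq> extensional J" using ext by auto
  fix p assume p: "p \<in> J"
  show "continuous_map (prodD I) Dtop (\<lambda>x. f x p)"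
    unfolding Dtop_def
  proof (subst continuous_map_componentwise_UNIV, intro allI)
    fix l
    show "continuous_map (prodD I) (discrete_topology UNIV) (\<lambda>x. f x p l)"
      unfolding continuous_map_def
    proof (intro conjI allI impI)
      show "(\<lambda>x. f x p l) \<in> topspace (prodD I) \<rightarrow> topspace (discrete_topology UNIV)" by simp
      fix U :: "bool set"
      show "openin (prodD I) {x \<in> topspace (prodD I). f x p l \<in> U}"
      proof (subst openin_subopen, intro ballI)
        fix x0 assume x0: "x0 \<in> {x \<in> topspace (prodD I). f x p l \<in> U}"
        then obtain M where M: "\<forall>y\<in>cyl I x0 M. f y p l = f x0 p l" using loc p by blast
        show "\<exists>T. openin (prodD I) T \<and> x0 \<in> T \<and> T \<subseteq> {x \<in> topspace (prodD I). f x p l \<in> U}"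
        proof (intro exI conjI)
          show "openin (prodD I) (cyl I x0 M)" by (rule cyl_open[OF fin])
          show "x0 \<in> cyl I x0 M" using x0 by (intro cyl_self) simp
          show "cyl I x0 M \<subseteq> {x \<in> topspace (prodD I). f x p l \<in> U}"
          proof
            fix y assume y: "y \<in> cyl I x0 M"
            then have "y \<in> topspace (prodD I)" unfolding cyl_def by simp
            then show "y \<in> {x \<in> topspace (prodD I). f x p l \<in> U}" using M y x0 by simp
          qed
        qed
      qed
    qed
  qed
qed

lemma open_cyl:
  assumes fin: "finite I" and U: "openin (prodD I) U" and x: "x \<in> U"
  shows "\<exists>M. cyl I x M \<subseteq> U"
proof -
  obtain V where V: "finite {i \<in> I. V i \<noteq> topspace Dtop}" "\<forall>i\<in>I. openin Dtop (V i)"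
    "x \<in> Pi\<^sub>E I V" "Pi\<^sub>E I V \<subseteq> U"
  proof -
    have "\<forall>x\<in>U. \<exists>V. finite {i \<in> I. V i \<noteq> topspace Dtop} \<and> (\<forall>i\<in>I. openin Dtop (V i)) \<and>
       x \<in> Pi\<^sub>E I V \<and> Pi\<^sub>E I V \<subseteq> U"
      using U unfolding prodD_def openin_product_topology_alt .
    then have "\<exists>V. finite {i \<in> I. V i \<noteq> topspace Dtop} \<and> (\<forall>i\<in>I. openin Dtop (V i)) \<and>
       x \<in> Pi\<^sub>E I V \<and> Pi\<^sub>E I V \<subseteq> U" using x by (rule bspec)
    then show ?thesis using that by blast
  qed
  have "\<forall>q\<in>I. \<exists>Mq. \<forall>b. (\<forall>l<Mq. b l = x q l) \<longrightarrow> b \<in> V q"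
  proof
    fix q assume q: "q \<in> I"
    have "openin (product_topology (\<lambda>_. discrete_topology UNIV) UNIV) (V q)" "x q \<in> V q"
      using V(2,3) q unfolding Dtop_def by (auto simp: PiE_iff)
    then obtain W where W: "finite {i \<in> UNIV. W i \<noteq> topspace (discrete_topology (UNIV::bool set))}"
      "x q \<in> Pi\<^sub>E UNIV W" "Pi\<^sub>E UNIV W \<subseteq> V q"
    proof -
      assume a: "openin (product_topology (\<lambda>_. discrete_topology UNIV) UNIV) (V q)" "x q \<in> V q"
      have "\<forall>x\<in>V q. \<exists>W. finite {i \<in> UNIV. W i \<noteq> topspace (discrete_topology (UNIV::bool set))} \<and>
         (\<forall>i\<in>UNIV. openin (discrete_topology UNIV) (W i)) \<and> x \<in> Pi\<^sub>E UNIV W \<and> Pi\<^sub>E UNIV W \<subseteq> V q"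
        using a(1) unfolding openin_product_topology_alt .
      then have "\<exists>W. finite {i \<in> UNIV. W i \<noteq> topspace (discrete_topology (UNIV::bool set))} \<and>
         (\<forall>i\<in>UNIV. openin (discrete_topology UNIV) (W i)) \<and> x q \<in> Pi\<^sub>E UNIV W \<and> Pi\<^sub>E UNIV W \<subseteq> V q"
        using a(2) by (rule bspec)
      then show ?thesis using that by blast
    qed
    have "finite {l. W l \<noteq> UNIV}" using W(1) unfolding topspace_discrete_topology by simp
    then obtain Mq where "{l. W l \<noteq> UNIV} \<subseteq> {..<Mq}"
      using finite_nat_bounded by meson
    then have Mq: "\<And>l. W l \<noteq> UNIV \<Longrightarrow> l < Mq" by blast
    show "\<exists>Mq. \<forall>b. (\<forall>l<Mq. b l = x q l) \<longrightarrow> b \<in> V q"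
    proof (rule exI[of _ Mq], intro allI impI)
      fix b assume b: "\<forall>l<Mq. b l = x q l"
      have "b \<in> Pi\<^sub>E UNIV W"
        unfolding PiE_UNIV_domain Pi_iff
      proof (intro ballI)
        fix l show "b l \<in> W l"
        proof (cases "W l = UNIV")
          case False
          then show ?thesis using Mq[OF False] b W(2) by auto
        qed simp
      qed
      then show "b \<in> V q" using W(3) by blast
    qed
  qed
  then obtain Mf where Mf0: "\<forall>q\<in>I. \<forall>b. (\<forall>l<Mf q. b l = x q l) \<longrightarrow> b \<in> V q"
    by (rule bchoice[elim_format]) blast
  then have Mf: "\<And>q b. q \<in> I \<Longrightarrow> (\<forall>l<Mf q. b l = x q l) \<Longrightarrow> b \<in> V q" by blast
  define M where "M = (\<Sum>q\<in>I. Mf q)"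
  have le: "q \<in> I \<Longrightarrow> Mf q \<le> M" for q
    unfolding M_def using fin by (intro member_le_sum) auto
  show ?thesis
  proof (rule exI[of _ M], rule subsetI)
    fix y assume y: "y \<in> cyl I x M"
    then have yt: "y \<in> Pi\<^sub>E I (\<lambda>_. UNIV)" and ya: "\<forall>q\<in>I. \<forall>l<M. y q l = x q l"
      unfolding cyl_def top_prodD by auto
    have "y \<in> Pi\<^sub>E I V"
    proof (rule PiE_I)
      fix q assume q: "q \<in> I"
      show "y q \<in> V q"
      proof (rule Mf[OF q], intro allI impI)
        fix l assume "l < Mf q"
        then have "l < M" using le[OF q] by linarith
        then show "y q l = x q l" using ya q by blast
      qed
    next
      fix q assume "q \<notin> I" then show "y q = undefined" using yt by (auto simp: PiE_iff extensional_def)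
    qed
    then show "y \<in> U" using V(4) by blast
  qed
qed

lemma compact_prodD: "compact_space (prodD I)"
  unfolding prodD_def Dtop_def
  by (simp add: compact_space_product_topology compact_space_discrete_topology)

lemma clopen_unif:
  assumes fin: "finite I" and op: "openin (prodD I) Z" and cl: "closedin (prodD I) Z"
  shows "\<exists>N. \<forall>x\<in>topspace (prodD I). \<forall>y\<in>topspace (prodD I).
            (\<forall>q\<in>I. \<forall>l<N. x q l = y q l) \<longrightarrow> (x \<in> Z \<longleftrightarrow> y \<in> Z)"
proof -
  have op2: "openin (prodD I) (topspace (prodD I) - Z)" using cl by (simp add: closedin_def)
  have "\<forall>x\<in>topspace (prodD I). \<exists>M. cyl I x M \<subseteq> Z \<or> cyl I x M \<subseteq> topspace (prodD I) - Z"
  proof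
    fix x assume x: "x \<in> topspace (prodD I)"
    show "\<exists>M. cyl I x M \<subseteq> Z \<or> cyl I x M \<subseteq> topspace (prodD I) - Z"
    proof (cases "x \<in> Z")
      case True then show ?thesis using open_cyl[OF fin op] by blast
    next
      case False then show ?thesis using open_cyl[OF fin op2, of x] x by blast
    qed
  qed
  then obtain Mx where Mx0: "\<forall>x\<in>topspace (prodD I). cyl I x (Mx x) \<subseteq> Z \<or> cyl I x (Mx x) \<subseteq> topspace (prodD I) - Z"
    by (rule bchoice[elim_format]) blast
  then have Mx: "\<And>x. x \<in> topspace (prodD I) \<Longrightarrow> cyl I x (Mx x) \<subseteq> Z \<or> cyl I x (Mx x) \<subseteq> topspace (prodD I) - Z"
    by blast
  have "\<exists>F. finite F \<and> F \<subseteq> (\<lambda>x. cyl I x (Mx x)) ` topspace (prodD I) \<and> topspace (prodD I) \<subseteq> \<Union>F"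
  proof -
    have c: "compact_space (prodD I)" by (rule compact_prodD)
    have o: "\<forall>U\<in>(\<lambda>x. cyl I x (Mx x)) ` topspace (prodD I). openin (prodD I) U"
      using cyl_open[OF fin] by blast
    have cv: "topspace (prodD I) \<subseteq> \<Union> ((\<lambda>x. cyl I x (Mx x)) ` topspace (prodD I))"
      using cyl_self by blast
    show ?thesis using c o cv unfolding compact_space_alt by blast
  qed
  then obtain F where F: "finite F" "F \<subseteq> (\<lambda>x. cyl I x (Mx x)) ` topspace (prodD I)" "topspace (prodD I) \<subseteq> \<Union>F"
    by blast
  then obtain P where P: "P \<subseteq> topspace (prodD I)" "finite P" "F = (\<lambda>x. cyl I x (Mx x)) ` P"
    by (meson finite_subset_image)
  define N where "N = (\<Sum>x\<in>P. Mx x)"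
  have le: "x \<in> P \<Longrightarrow> Mx x \<le> N" for x unfolding N_def using P(2) by (intro member_le_sum) auto
  show ?thesis
  proof (rule exI[of _ N], intro ballI impI)
    fix x y assume x: "x \<in> topspace (prodD I)" and y: "y \<in> topspace (prodD I)"
      and ag: "\<forall>q\<in>I. \<forall>l<N. x q l = y q l"
    obtain p where p: "p \<in> P" "x \<in> cyl I p (Mx p)" using F(3) P(3) x by auto
    have "y \<in> cyl I p (Mx p)"
      unfolding cyl_def
    proof (intro CollectI conjI ballI allI impI)
      show "y \<in> topspace (prodD I)" by (rule y)
      fix q l assume q: "q \<in> I" and l: "l < Mx p"
      then have "l < N" using le[OF p(1)] by linarith
      then have "y q l = x q l" using ag q by auto
      also have "x q l = p q l" using p(2) q l unfolding cyl_def by auto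
      finally show "y q l = p q l" .
    qed
    then show "x \<in> Z \<longleftrightarrow> y \<in> Z" using Mx[of p] p P(1) by auto
  qed
qed



definition Fib :: "(nat \<Rightarrow> 'i) \<Rightarrow> ('i \<Rightarrow> nat \<Rightarrow> bool) set \<Rightarrow> nat \<Rightarrow> ('i \<Rightarrow> nat \<Rightarrow> bool) \<Rightarrow> (nat \<Rightarrow> bool) set" where
  "Fib e Z k y = {b. \<exists>z\<in>Z. (\<forall>j<k. z (e j) = y (e j)) \<and> z (e k) = b}"

primrec outp :: "(nat \<Rightarrow> 'i) \<Rightarrow> ('i \<Rightarrow> nat \<Rightarrow> bool) set \<Rightarrow> ('i \<Rightarrow> nat \<Rightarrow> bool) \<Rightarrow> nat \<Rightarrow> ('i \<Rightarrow> nat \<Rightarrow> bool)" where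
  "outp e Z x 0 = (\<lambda>_. undefined)"
| "outp e Z x (Suc k) = (outp e Z x k)(e k := Phi (Fib e Z k (outp e Z x k)) (x (e k)))"

lemma Fib_cong: "(\<And>j. j < k \<Longrightarrow> y (e j) = y' (e j)) \<Longrightarrow> Fib e Z k y = Fib e Z k y'"
  unfolding Fib_def by auto

lemma fin_bound:
  assumes "finite S" "\<forall>i\<in>S. \<exists>M::nat. \<forall>M'\<ge>M. Q i M'"
  shows "\<exists>M::nat. \<forall>i\<in>S. \<forall>M'\<ge>M. Q i M'"
  using assms
proof (induction S rule: finite_induct)
  case empty then show ?case by simp
next
  case (insert a S)
  then obtain M1 where M1: "\<forall>i\<in>S. \<forall>M'\<ge>M1. Q i M'" by auto
  obtain M2 where M2: "\<forall>M'\<ge>M2. Q a M'" using insert.prems by auto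
  show ?case
  proof (rule exI[of _ "max M1 M2"], intro ballI allI impI)
    fix i M' assume i: "i \<in> insert a S" and M': "max M1 M2 \<le> M'"
    have "M1 \<le> M'" "M2 \<le> M'" using M' by (simp_all add: max_def split: if_splits)
    then show "Q i M'" using i M1 M2 by auto
  qed
qed

lemma cyl_mono: "M \<le> M' \<Longrightarrow> cyl I x M' \<subseteq> cyl I x M"
  unfolding cyl_def by auto

context
  fixes e :: "nat \<Rightarrow> 'a list" and n :: nat and Z and N :: nat
  assumes inj: "inj_on e {..<n}"
    and Zsub: "Z \<subseteq> topspace (prodD (e ` {..<n}))"
    and Zne: "Z \<noteq> {}"
    and Zdet: "\<forall>x\<in>topspace (prodD (e ` {..<n})). \<forall>y\<in>topspace (prodD (e ` {..<n})).
                 (\<forall>q\<in>e ` {..<n}. \<forall>l<N. x q l = y q l) \<longrightarrow> (x \<in> Z \<longleftrightarrow> y \<in> Z)"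
begin

abbreviation "II \<equiv> e ` {..<n}"

lemma e_neq: "j < k \<Longrightarrow> k < n \<Longrightarrow> e j \<noteq> e k"
  using inj unfolding inj_on_def by (metis lessThan_iff order.strict_trans less_irrefl)

lemma outp_upd: "j < k \<Longrightarrow> k < n \<Longrightarrow> outp e Z x (Suc k) (e j) = outp e Z x k (e j)"
  using e_neq by simp

lemma outp_new: "outp e Z x (Suc k) (e k) = Phi (Fib e Z k (outp e Z x k)) (x (e k))"
  by simp

lemma outp_stable: "j < k \<Longrightarrow> k \<le> n \<Longrightarrow> outp e Z x k (e j) = outp e Z x (Suc j) (e j)"
proof (induction k)
  case 0 then show ?case by simp
next
  case (Suc k)
  show ?case
  proof (cases "j = k")
    case False
    then have "j < k" using Suc.prems by simp
    then show ?thesis using Suc outp_upd[of j k x] by simp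
  qed simp
qed

lemma outp_dep:
  "k \<le> n \<Longrightarrow> (\<And>j. j < k \<Longrightarrow> x0 (e j) = x1 (e j)) \<Longrightarrow> j < k \<Longrightarrow> outp e Z x0 k (e j) = outp e Z x1 k (e j)"
proof (induction k arbitrary: j)
  case 0 then show ?case by simp
next
  case (Suc k)
  have IH: "\<And>j. j < k \<Longrightarrow> outp e Z x0 k (e j) = outp e Z x1 k (e j)"
    using Suc.IH Suc.prems by simp
  show ?case
  proof (cases "j = k")
    case True
    have "Fib e Z k (outp e Z x0 k) = Fib e Z k (outp e Z x1 k)" by (rule Fib_cong) (rule IH)
    moreover have "x0 (e k) = x1 (e k)" using Suc.prems by simp
    ultimately show ?thesis using True by simp
  next
    case False
    then have jk: "j < k" using Suc.prems by simp
    have kn: "k < n" using Suc.prems by simp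
    have "outp e Z x0 (Suc k) (e j) = outp e Z x0 k (e j)" by (rule outp_upd[OF jk kn])
    moreover have "outp e Z x1 (Suc k) (e j) = outp e Z x1 k (e j)" by (rule outp_upd[OF jk kn])
    ultimately show ?thesis using IH[OF jk] by simp
  qed
qed

lemma eI: "k < n \<Longrightarrow> e k \<in> II" by simp

lemma Fib_det:
  assumes k: "k < n" and b: "b \<in> Fib e Z k y" and ag: "\<And>l. l < N \<Longrightarrow> b l = b' l"
  shows "b' \<in> Fib e Z k y"
proof -
  obtain z where z: "z \<in> Z" "\<forall>j<k. z (e j) = y (e j)" "z (e k) = b" using b unfolding Fib_def by auto
  define z' where "z' = z(e k := b')"
  have zt: "z \<in> topspace (prodD II)" using z Zsub by auto
  have zt': "z' \<in> topspace (prodD II)" using zt k unfolding z'_def top_prodD by (auto simp: PiE_iff extensional_def)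
  have ag': "\<forall>q\<in>II. \<forall>l<N. z q l = z' q l"
  proof (intro ballI allI impI)
    fix q l assume "q \<in> II" "l < N"
    then show "z q l = z' q l" using z(3) ag unfolding z'_def by (cases "q = e k") auto
  qed
  have "z' \<in> Z"
    using bspec[OF bspec[OF Zdet zt] zt'] ag' z(1) by blast
  moreover have "\<forall>j<k. z' (e j) = y (e j)"
  proof (intro allI impI)
    fix j assume j: "j < k"
    then have "e j \<noteq> e k" using e_neq k by blast
    then show "z' (e j) = y (e j)" using z(2) j unfolding z'_def by simp
  qed
  moreover have "z' (e k) = b'" unfolding z'_def by simp
  ultimately show ?thesis unfolding Fib_def by blast
qed

lemma Fib_trunc:
  assumes k: "k < n" and ag: "\<And>j l. j < k \<Longrightarrow> l < N \<Longrightarrow> y (e j) l = y' (e j) l"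
  shows "Fib e Z k y \<subseteq> Fib e Z k y'"
proof
  fix b assume "b \<in> Fib e Z k y"
  then obtain z where z: "z \<in> Z" "\<forall>j<k. z (e j) = y (e j)" "z (e k) = b" unfolding Fib_def by auto
  define z' where "z' = (\<lambda>q. if q \<in> e ` {..<k} then y' q else z q)"
  have zt: "z \<in> topspace (prodD II)" using z Zsub by auto
  have sub: "e ` {..<k} \<subseteq> II" using k by auto
  have zt': "z' \<in> topspace (prodD II)"
    using zt sub unfolding z'_def top_prodD by (auto simp: PiE_iff extensional_def)
  have "\<forall>q\<in>II. \<forall>l<N. z q l = z' q l"
  proof (intro ballI allI impI)
    fix q l assume q: "q \<in> II" and l: "l < N"
    show "z q l = z' q l"
    proof (cases "q \<in> e ` {..<k}")
      case True
      then obtain j where j: "j < k" "q = e j" by auto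
      then show ?thesis using z(2) ag[OF j(1) l] unfolding z'_def by auto
    qed (simp add: z'_def)
  qed
  then have "z' \<in> Z" using bspec[OF bspec[OF Zdet zt] zt'] z(1) by blast
  moreover have "z' (e k) = b"
  proof -
    have "e k \<notin> e ` {..<k}"
    proof
      assume "e k \<in> e ` {..<k}"
      then obtain j where "j < k" "e k = e j" by auto
      then show False using e_neq[of j k] k by simp
    qed
    then show ?thesis using z(3) unfolding z'_def by simp
  qed
  moreover have "\<forall>j<k. z' (e j) = y' (e j)" unfolding z'_def by auto
  ultimately show "b \<in> Fib e Z k y'" unfolding Fib_def by auto
qed

lemma good_Fib:
  assumes k: "k < n" and ne: "Fib e Z k y \<noteq> {}"
  shows "goodf (Fib e Z k y) (Phi (Fib e Z k y))"
  by (rule Phi_good[where N=N, OF ne]) (use Fib_det[OF k] in blast)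

lemma outp_inv: "k \<le> n \<Longrightarrow> \<exists>z\<in>Z. \<forall>j<k. z (e j) = outp e Z x k (e j)"
proof (induction k)
  case 0 then show ?case using Zne by auto
next
  case (Suc k)
  then obtain z where z: "z \<in> Z" "\<forall>j<k. z (e j) = outp e Z x k (e j)" by auto
  have k: "k < n" using Suc.prems by simp
  define A where "A = Fib e Z k (outp e Z x k)"
  have "z (e k) \<in> A" unfolding A_def Fib_def using z by auto
  then have ne: "A \<noteq> {}" by auto
  have g: "goodf A (Phi A)" unfolding A_def by (rule good_Fib[OF k]) (use ne A_def in simp)
  then have "Phi A (x (e k)) \<in> A" unfolding goodf_def bij_betw_def by auto
  then obtain z' where z': "z' \<in> Z" "\<forall>j<k. z' (e j) = outp e Z x k (e j)" "z' (e k) = Phi A (x (e k))"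
    unfolding A_def Fib_def by auto
  have "\<forall>j<Suc k. z' (e j) = outp e Z x (Suc k) (e j)"
  proof (intro allI impI)
    fix j assume "j < Suc k"
    then consider "j < k" | "j = k" by linarith
    then show "z' (e j) = outp e Z x (Suc k) (e j)"
    proof cases
      case 1 then show ?thesis using z'(2) outp_upd[OF 1 k] by simp
    next
      case 2 then show ?thesis using z'(3) unfolding A_def by simp
    qed
  qed
  then show ?case using z'(1) by blast
qed

lemma Fib_ne: "k < n \<Longrightarrow> Fib e Z k (outp e Z x k) \<noteq> {}"
proof -
  assume k: "k < n"
  obtain z where "z \<in> Z" "\<forall>j<k. z (e j) = outp e Z x k (e j)" using outp_inv[of k x] k by auto
  then have "z (e k) \<in> Fib e Z k (outp e Z x k)" unfolding Fib_def by auto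
  then show ?thesis by auto
qed

definition GG :: "('a list \<Rightarrow> nat \<Rightarrow> bool) \<Rightarrow> ('a list \<Rightarrow> nat \<Rightarrow> bool)" where
  "GG x = restrict (outp e Z x n) II"

lemma top_eq: "z \<in> topspace (prodD II) \<Longrightarrow> (\<forall>j<n. z (e j) = w (e j)) \<Longrightarrow> z = restrict w II"
  unfolding top_prodD by (auto simp: PiE_iff extensional_def fun_eq_iff)

lemma GG_in: "GG x \<in> Z"
proof -
  obtain z where z: "z \<in> Z" "\<forall>j<n. z (e j) = outp e Z x n (e j)" using outp_inv[of n x] by auto
  have "z = GG x" unfolding GG_def by (rule top_eq) (use z Zsub in auto)
  then show ?thesis using z by simp
qed

lemma GG_e: "j < n \<Longrightarrow> GG x (e j) = outp e Z x (Suc j) (e j)"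
  unfolding GG_def using outp_stable[of j n x] by simp

lemma GG_prefix:
  assumes k: "k \<le> n"
  shows "(\<forall>j<k. x0 (e j) = x1 (e j)) \<longleftrightarrow> (\<forall>j<k. GG x0 (e j) = GG x1 (e j))"
proof
  assume a: "\<forall>j<k. x0 (e j) = x1 (e j)"
  show "\<forall>j<k. GG x0 (e j) = GG x1 (e j)"
  proof (intro allI impI)
    fix j assume j: "j < k"
    have "outp e Z x0 (Suc j) (e j) = outp e Z x1 (Suc j) (e j)"
      by (rule outp_dep) (use a j k in auto)
    then show "GG x0 (e j) = GG x1 (e j)" using GG_e j k by simp
  qed
next
  show "\<forall>j<k. GG x0 (e j) = GG x1 (e j) \<Longrightarrow> \<forall>j<k. x0 (e j) = x1 (e j)"
    using k
  proof (induction k)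
    case 0 then show ?case by simp
  next
    case (Suc k)
    then have IH: "\<forall>j<k. x0 (e j) = x1 (e j)" by simp
    have kn: "k < n" using Suc.prems by simp
    have oe: "\<And>j. j < k \<Longrightarrow> outp e Z x0 k (e j) = outp e Z x1 k (e j)"
      by (rule outp_dep) (use IH kn in auto)
    define A where "A = Fib e Z k (outp e Z x0 k)"
    have A1: "Fib e Z k (outp e Z x1 k) = A" unfolding A_def by (rule Fib_cong) (simp add: oe)
    have g: "goodf A (Phi A)" unfolding A_def by (rule good_Fib[OF kn Fib_ne[OF kn]])
    have "GG x0 (e k) = GG x1 (e k)" using Suc.prems by simp
    then have "Phi A (x0 (e k)) = Phi A (x1 (e k))"
      using GG_e[OF kn, of x0] GG_e[OF kn, of x1] A1 unfolding A_def by simp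
    then have "x0 (e k) = x1 (e k)" using g unfolding goodf_def bij_betw_def inj_on_def by blast
    then show ?case using IH less_Suc_eq by auto
  qed
qed

lemma GG_onto:
  assumes z: "z \<in> Z"
  shows "\<exists>x\<in>topspace (prodD II). GG x = z"
proof -
  define x where "x = restrict (\<lambda>q. inv_into UNIV (Phi (Fib e Z (the_inv_into {..<n} e q) z)) (z q)) II"
  have xe: "x (e k) = inv_into UNIV (Phi (Fib e Z k z)) (z (e k))" if "k < n" for k
    unfolding x_def using that the_inv_into_f_f[OF inj, of k] by simp
  have xt: "x \<in> topspace (prodD II)" unfolding x_def top_prodD by simp
  have main: "k \<le> n \<Longrightarrow> \<forall>j<k. outp e Z x k (e j) = z (e j)" for k
  proof (induction k)
    case 0 then show ?case by simp
  next
    case (Suc k)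
    then have IH: "\<forall>j<k. outp e Z x k (e j) = z (e j)" by simp
    have kn: "k < n" using Suc.prems by simp
    define A where "A = Fib e Z k z"
    have A1: "Fib e Z k (outp e Z x k) = A" unfolding A_def by (rule Fib_cong) (simp add: IH)
    have zA: "z (e k) \<in> A" unfolding A_def Fib_def using z by auto
    have g: "goodf A (Phi A)" using good_Fib[OF kn Fib_ne[OF kn, of x]] A1 by simp
    then have "z (e k) \<in> range (Phi A)" using zA unfolding goodf_def bij_betw_def by auto
    then have "Phi A (inv_into UNIV (Phi A) (z (e k))) = z (e k)" by (rule f_inv_into_f)
    then have "outp e Z x (Suc k) (e k) = z (e k)" using A1 xe[OF kn] unfolding A_def by simp
    then show ?case using IH outp_upd[OF _ kn] less_Suc_eq by auto
  qed
  have "z = GG x" unfolding GG_def by (rule top_eq) (use z Zsub main[of n] in auto)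
  then show ?thesis using xt by auto
qed

lemma outp_loc:
  "k \<le> n \<Longrightarrow> x0 \<in> topspace (prodD II) \<Longrightarrow> j < k \<Longrightarrow>
     \<exists>M. \<forall>M'\<ge>M. \<forall>y\<in>cyl II x0 M'. outp e Z y k (e j) l = outp e Z x0 k (e j) l"
proof (induction k arbitrary: j l)
  case 0 then show ?case by simp
next
  case (Suc k)
  have kn: "k < n" using Suc.prems by simp
  show ?case
  proof (cases "j < k")
    case True
    then show ?thesis using Suc.IH[of j l] Suc.prems outp_upd[OF True kn] by simp
  next
    case False
    then have jk: "j = k" using Suc.prems by simp
    have "\<forall>p\<in>{..<k} \<times> {..<N}. \<exists>M. \<forall>M'\<ge>M. \<forall>y\<in>cyl II x0 M'.
            outp e Z y k (e (fst p)) (snd p) = outp e Z x0 k (e (fst p)) (snd p)"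
      using Suc.IH Suc.prems by auto
    then obtain M1 where M1: "\<forall>p\<in>{..<k} \<times> {..<N}. \<forall>M'\<ge>M1. \<forall>y\<in>cyl II x0 M'.
            outp e Z y k (e (fst p)) (snd p) = outp e Z x0 k (e (fst p)) (snd p)"
      using fin_bound[of "{..<k} \<times> {..<N}" "\<lambda>p M'. \<forall>y\<in>cyl II x0 M'.
            outp e Z y k (e (fst p)) (snd p) = outp e Z x0 k (e (fst p)) (snd p)"] by auto
    define A where "A = Fib e Z k (outp e Z x0 k)"
    have g: "goodf A (Phi A)" unfolding A_def by (rule good_Fib[OF kn Fib_ne[OF kn]])
    then obtain M2 where M2: "\<forall>b'. (\<forall>l'<M2. b' l' = x0 (e k) l') \<longrightarrow> Phi A b' l = Phi A (x0 (e k)) l"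
      unfolding goodf_def by blast
    show ?thesis
    proof (rule exI[of _ "max M1 M2"], intro allI impI ballI)
      fix M' y assume M': "max M1 M2 \<le> M'" and y: "y \<in> cyl II x0 M'"
      have M1': "M1 \<le> M'" and M2': "M2 \<le> M'" using M' by (simp_all add: max_def split: if_splits)
      have ag: "outp e Z y k (e j') l' = outp e Z x0 k (e j') l'" if "j' < k" "l' < N" for j' l'
      proof -
        have "(j', l') \<in> {..<k} \<times> {..<N}" using that by simp
        then have "\<forall>M'\<ge>M1. \<forall>y\<in>cyl II x0 M'.
            outp e Z y k (e (fst (j', l'))) (snd (j', l')) = outp e Z x0 k (e (fst (j', l'))) (snd (j', l'))"
          by (rule bspec[OF M1])
        then show ?thesis using M1' y by simp
      qed
      have "Fib e Z k (outp e Z y k) = A"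
        unfolding A_def
        by (rule equalityI; rule Fib_trunc[OF kn]) (use ag in auto)
      moreover have "\<forall>l'<M2. y (e k) l' = x0 (e k) l'"
      proof (intro allI impI)
        fix l' assume "l' < M2"
        then have "l' < M'" using M2' by linarith
        moreover have "e k \<in> II" using kn by simp
        ultimately show "y (e k) l' = x0 (e k) l'" using y unfolding cyl_def by blast
      qed
      then have "Phi A (y (e k)) l = Phi A (x0 (e k)) l" using M2 by blast
      ultimately show "outp e Z y (Suc k) (e j) l = outp e Z x0 (Suc k) (e j) l"
        unfolding jk outp_new A_def by simp
    qed
  qed
qed

lemma GG_cont: "continuous_map (prodD II) (prodD II) GG"
proof (rule LD_cont)
  show "finite II" by simp
  show "GG x \<in> extensional II" for x unfolding GG_def by simp
  fix x0 p l assume x0: "x0 \<in> topspace (prodD II)" and p: "p \<in> II"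
  then obtain j where j: "j < n" "p = e j" by auto
  obtain M where M: "\<forall>M'\<ge>M. \<forall>y\<in>cyl II x0 M'. outp e Z y (Suc j) (e j) l = outp e Z x0 (Suc j) (e j) l"
    using outp_loc[of "Suc j" x0 j l] j x0 by auto
  show "\<exists>M. \<forall>y\<in>cyl II x0 M. GG y p l = GG x0 p l"
    using M GG_e[OF j(1)] j(2) by auto
qed

lemma GG_homeo: "homeomorphic_map (prodD II) (subtopology (prodD II) Z) GG"
proof (rule continuous_imp_homeomorphic_map)
  show "continuous_map (prodD II) (subtopology (prodD II) Z) GG"
    unfolding continuous_map_in_subtopology using GG_cont GG_in by auto
  show "compact_space (prodD II)" by (rule compact_prodD)
  have "Hausdorff_space (prodD II)"
    unfolding prodD_def Dtop_def
    by (simp add: Hausdorff_space_product_topology Hausdorff_space_discrete_topology)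
  then show "Hausdorff_space (subtopology (prodD II) Z)" by (rule Hausdorff_space_subtopology)
  show "GG ` topspace (prodD II) = topspace (subtopology (prodD II) Z)"
  proof
    show "GG ` topspace (prodD II) \<subseteq> topspace (subtopology (prodD II) Z)"
      using GG_in Zsub by auto
    show "topspace (subtopology (prodD II) Z) \<subseteq> GG ` topspace (prodD II)"
    proof
      fix z assume "z \<in> topspace (subtopology (prodD II) Z)"
      then have "z \<in> Z" by simp
      then obtain x where "x \<in> topspace (prodD II)" "GG x = z" using GG_onto by blast
      then show "z \<in> GG ` topspace (prodD II)" by blast
    qed
  qed
  show "inj_on GG (topspace (prodD II))"
  proof (rule inj_onI)
    fix x0 x1 assume x0: "x0 \<in> topspace (prodD II)" and x1: "x1 \<in> topspace (prodD II)" and eq: "GG x0 = GG x1"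
    have "\<forall>j<n. x0 (e j) = x1 (e j)" using GG_prefix[of n x0 x1] eq by simp
    then have "x0 = restrict x1 II" by (rule top_eq[OF x0])
    also have "\<dots> = x1" using x1 unfolding top_prodD by (simp add: PiE_iff extensional_restrict)
    finally show "x0 = x1" .
  qed
qed

end



lemma below_eq:
  fixes i :: "'a list"
  shows "below i = (\<lambda>k. take (Suc k) i) ` {..<length i}"
proof
  show "below i \<subseteq> (\<lambda>k. take (Suc k) i) ` {..<length i}"
  proof
    fix j assume "j \<in> below i"
    then have j: "j \<noteq> []" "prefix j i" unfolding below_def Tset_def by auto
    then obtain zs where izs: "i = j @ zs" by (auto simp: prefix_def)
    have lj: "length j > 0" using j(1) by simp
    have "j = take (Suc (length j - 1)) i" using izs lj by simp
    moreover have "length i = length j + length zs" using izs by simp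
    then have "length j - 1 < length i" using lj by linarith
    ultimately show "j \<in> (\<lambda>k. take (Suc k) i) ` {..<length i}" by blast
  qed
  show "(\<lambda>k. take (Suc k) i) ` {..<length i} \<subseteq> below i"
    unfolding below_def Tset_def by (auto simp: take_is_prefix)
qed

lemma inj_take: "inj_on (\<lambda>k. take (Suc k) i) {..<length i}"
proof (rule inj_onI)
  fix a b assume "a \<in> {..<length i}" "b \<in> {..<length i}" "take (Suc a) i = take (Suc b) i"
  then have "length (take (Suc a) i) = length (take (Suc b) i)" by simp
  then show "a = b" using \<open>a \<in> _\<close> \<open>b \<in> _\<close> by simp
qed

lemma Xi_below:
  fixes i :: "'a list"
  assumes xi: "\<xi> \<in> Xi" and sub: "\<xi> \<subseteq> below i"
  shows "\<exists>k\<le>length i. \<xi> = (\<lambda>k. take (Suc k) i) ` {..<k}"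
proof -
  define e where "e = (\<lambda>k. take (Suc k) i)"
  define n where "n = length i"
  have dc: "\<And>j q. j \<in> \<xi> \<Longrightarrow> q \<in> Tset \<Longrightarrow> strict_prefix q j \<Longrightarrow> q \<in> \<xi>"
    using xi unfolding Xi_def by blast
  have be: "below i = e ` {..<n}" unfolding e_def n_def by (rule below_eq)
  have sp: "strict_prefix (e a) (e b)" if "a < b" "b < n" for a b
  proof -
    have "take (Suc a) (take (Suc b) i) = take (Suc a) i" using that by (simp add: min_def)
    then have "prefix (e a) (e b)" unfolding e_def by (metis take_is_prefix)
    moreover have "length (e a) \<noteq> length (e b)" using that unfolding e_def n_def by simp
    ultimately show ?thesis by (auto simp: strict_prefix_def)
  qed
  have eT: "e a \<in> Tset" if "a < n" for a using that unfolding e_def n_def Tset_def by (cases i) auto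
  define k where "k = (LEAST k. \<not> (k < n \<and> e k \<in> \<xi>))"
  have k1: "\<not> (k < n \<and> e k \<in> \<xi>)" unfolding k_def by (rule LeastI[of _ n]) simp
  have k2: "j < k \<Longrightarrow> j < n \<and> e j \<in> \<xi>" for j unfolding k_def using not_less_Least by blast
  have kn: "k \<le> n" unfolding k_def by (rule Least_le) simp
  have "\<xi> = e ` {..<k}"
  proof
    show "e ` {..<k} \<subseteq> \<xi>" using k2 by auto
    show "\<xi> \<subseteq> e ` {..<k}"
    proof
      fix q assume q: "q \<in> \<xi>"
      then obtain j where j: "j < n" "q = e j" using sub be by auto
      have "j < k"
      proof (rule ccontr)
        assume "\<not> j < k"
        then have "k \<le> j" by simp
        then have "k < n" "e k \<in> \<xi>"
        proof -
          show "k < n" using \<open>k \<le> j\<close> j(1) by simp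
          show "e k \<in> \<xi>"
          proof (cases "k = j")
            case True then show ?thesis using q j by simp
          next
            case False
            then have "k < j" using \<open>k \<le> j\<close> by simp
            then show ?thesis using dc[OF q eT[of k] ] sp[of k j] j \<open>k < n\<close> by simp
          qed
        qed
        then show False using k1 by simp
      qed
      then show "q \<in> e ` {..<k}" using j by auto
    qed
  qed
  then show ?thesis using kn unfolding e_def n_def by blast
qed

theorem lemma2p17:
  fixes i :: "'a list" and X Y :: "('a list \<Rightarrow> nat \<Rightarrow> bool) set"
  assumes "i \<in> Tset"
    and "X \<in> IPS (below i)"
    and "Y \<noteq> {}" and "Y \<subseteq> X"
    and "openin (subtopology (prodD (below i)) X) Y"
    and "closedin (subtopology (prodD (below i)) X) Y"
  shows "Y \<in> IPS (below i)"
proof -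
  define e where "e = (\<lambda>k. take (Suc k) i)"
  define n where "n = length i"
  have be: "below i = e ` {..<n}" unfolding e_def n_def by (rule below_eq)
  have inj: "inj_on e {..<n}" unfolding e_def n_def by (rule inj_take)
  define P where "P = prodD (below i)"
  obtain H where Xt: "X \<subseteq> topspace P" and Hh: "homeomorphic_map P (subtopology P X) H"
    and Hc: "\<forall>x0\<in>topspace P. \<forall>x1\<in>topspace P. \<forall>\<xi>\<in>Xi. \<xi> \<subseteq> below i \<longrightarrow>
           (restrict x0 \<xi> = restrict x1 \<xi> \<longleftrightarrow> restrict (H x0) \<xi> = restrict (H x1) \<xi>)"
    using assms(2) unfolding IPS_def P_def by blast
  have Hcont: "continuous_map P (subtopology P X) H" using Hh by (rule homeomorphic_imp_continuous_map)
  have Hsurj: "H ` topspace P = X"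
    using homeomorphic_imp_surjective_map[OF Hh] Xt by (simp add: Int_absorb1)
  define Z where "Z = {x \<in> topspace P. H x \<in> Y}"
  have Zo: "openin P Z" unfolding Z_def
    by (rule openin_continuous_map_preimage[OF Hcont]) (use assms(5) P_def in simp)
  have Zc: "closedin P Z" unfolding Z_def
    by (rule closedin_continuous_map_preimage[OF Hcont]) (use assms(6) P_def in simp)
  have Zsub: "Z \<subseteq> topspace (prodD (e ` {..<n}))" unfolding Z_def P_def be by auto
  have Zne: "Z \<noteq> {}"
  proof -
    obtain y where "y \<in> Y" using assms(3) by auto
    then obtain x where "x \<in> topspace P" "H x = y" using assms(4) Hsurj by blast
    then show ?thesis unfolding Z_def using \<open>y \<in> Y\<close> by blast
  qed
  have fin: "finite (e ` {..<n})" by simp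
  obtain N where Zdet: "\<forall>x\<in>topspace (prodD (e ` {..<n})). \<forall>y\<in>topspace (prodD (e ` {..<n})).
            (\<forall>q\<in>e ` {..<n}. \<forall>l<N. x q l = y q l) \<longrightarrow> (x \<in> Z \<longleftrightarrow> y \<in> Z)"
    using clopen_unif[OF fin] Zo Zc unfolding P_def be by blast
  define G where "G = GG e n Z"
  have Gh: "homeomorphic_map P (subtopology P Z) G"
    unfolding G_def P_def be by (rule GG_homeo[OF inj Zsub Zne Zdet])
  have Gp: "\<And>k x0 x1. k \<le> n \<Longrightarrow> (\<forall>j<k. x0 (e j) = x1 (e j)) \<longleftrightarrow> (\<forall>j<k. G x0 (e j) = G x1 (e j))"
    unfolding G_def by (rule GG_prefix[OF inj Zsub Zne Zdet])
  have GZ: "\<And>x. G x \<in> Z" unfolding G_def by (rule GG_in[OF inj Zsub Zne Zdet])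
  have HZ: "H ` (topspace P \<inter> Z) = topspace (subtopology P X) \<inter> Y"
  proof
    show "H ` (topspace P \<inter> Z) \<subseteq> topspace (subtopology P X) \<inter> Y"
      unfolding Z_def using assms(4) Xt by auto
    show "topspace (subtopology P X) \<inter> Y \<subseteq> H ` (topspace P \<inter> Z)"
    proof
      fix y assume "y \<in> topspace (subtopology P X) \<inter> Y"
      then have y: "y \<in> Y" by simp
      then obtain x where "x \<in> topspace P" "H x = y" using assms(4) Hsurj by blast
      then show "y \<in> H ` (topspace P \<inter> Z)" unfolding Z_def using y by blast
    qed
  qed
  have H2: "homeomorphic_map (subtopology P Z) (subtopology (subtopology P X) Y) H"
    by (rule homeomorphic_map_subtopologies[OF Hh HZ])
  have "subtopology (subtopology P X) Y = subtopology P Y"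
    using assms(4) by (simp add: subtopology_subtopology Int_absorb1)
  then have H2': "homeomorphic_map (subtopology P Z) (subtopology P Y) H" using H2 by simp
  have HG: "homeomorphic_map P (subtopology P Y) (H \<circ> G)"
    by (rule homeomorphic_map_compose[OF Gh H2'])
  have Yt: "Y \<subseteq> topspace P" using assms(4) Xt by blast
  have restr: "restrict x0 (e ` {..<k}) = restrict x1 (e ` {..<k}) \<longleftrightarrow> (\<forall>j<k. x0 (e j) = x1 (e j))"
    for x0 x1 :: "'a list \<Rightarrow> nat \<Rightarrow> bool" and k
    by (auto simp: fun_eq_iff restrict_def)
  have cond: "\<forall>x0\<in>topspace P. \<forall>x1\<in>topspace P. \<forall>\<xi>\<in>Xi. \<xi> \<subseteq> below i \<longrightarrow>
           (restrict x0 \<xi> = restrict x1 \<xi> \<longleftrightarrow> restrict ((H \<circ> G) x0) \<xi> = restrict ((H \<circ> G) x1) \<xi>)"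
  proof (intro ballI impI)
    fix x0 x1 \<xi> assume x0: "x0 \<in> topspace P" and x1: "x1 \<in> topspace P" and xi: "\<xi> \<in> Xi" and sub: "\<xi> \<subseteq> below i"
    obtain k where k: "k \<le> n" "\<xi> = e ` {..<k}" using Xi_below[OF xi sub] unfolding e_def n_def by blast
    have g0: "G x0 \<in> topspace P" "G x1 \<in> topspace P" using GZ Zsub unfolding P_def be by auto
    have "restrict ((H \<circ> G) x0) \<xi> = restrict ((H \<circ> G) x1) \<xi> \<longleftrightarrow> restrict (G x0) \<xi> = restrict (G x1) \<xi>"
      using Hc g0 xi sub by simp
    also have "\<dots> \<longleftrightarrow> restrict x0 \<xi> = restrict x1 \<xi>"
      unfolding k(2) restr using Gp[OF k(1)] by simp
    finally show "restrict x0 \<xi> = restrict x1 \<xi> \<longleftrightarrow> restrict ((H \<circ> G) x0) \<xi> = restrict ((H \<circ> G) x1) \<xi>" by simp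
  qed
  show ?thesis
    unfolding IPS_def using Yt HG cond unfolding P_def by blast
qed

end
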